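(* Let $n\ge 1$, let $V_1,\dots,V_n>0$, $R_1,\dots,R_n>0$, $p\in(0,1)$ and $z>0$. Then the system of equations in unknowns $a_0,b_0$ $$\frac{1-p}{p}b_0=\sum_{i=1}^n\frac{1+\frac{b_0}{a_0R_i}}{V_i-\frac{1}{a_0}-\frac{1}{b_0}},\qquad \frac{1}{zp}b_0-a_0=\sum_{i=1}^n\frac{1+\frac{a_0R_i}{b_0}}{V_i-\frac{1}{a_0}-\frac{1}{b_0}}$$ has a positive solution with $a_0>0$ and $b_0>0$.
   Context: These are the Hamling equations for log odds ratios: $R_i$ are reported odds ratios with reported variances $V_i$ (of the log odds ratios), $p$ is the ratio of unexposed controls to total controls, $z$ is the ratio of total controls to total cases, and $a_0,b_0$ are the reference-group pseudo-cases and pseudo-non-cases. *)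

theory Defs
  imports "HOL-Analysis.Analysis"
begin

end

theory Submission
  imports Defs
begin

lemma quad_root:
  fixes k b g :: real
  assumes "k > 0" "g > 0"
  defines "t \<equiv> (- b + sqrt (b^2 + 4*k*g)) / (2*k)"
  shows "t > 0" "k * t^2 + b * t - g = 0"
proof -
  have d: "b^2 + 4*k*g > b^2" using assms by simp
  have "sqrt (b^2 + 4*k*g) > sqrt (b^2)" using d real_sqrt_less_iff by blast
  hence "sqrt (b^2 + 4*k*g) > b" by simp
  thus "t > 0" unfolding t_def using assms by (simp add: field_simps)
  have sq: "(sqrt (b^2 + 4*k*g))^2 = b^2 + 4*k*g" using d by (simp add: power2_eq_square)
  show "k * t^2 + b * t - g = 0" unfolding t_def using assms sq
    by (simp add: field_simps power2_eq_square)
qed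

theorem theorem4:
  fixes n :: nat and V R :: "nat \<Rightarrow> real" and p z :: real
  assumes "n \<ge> 1"
    and "\<forall>i\<in>{1..n}. V i > 0"
    and "\<forall>i\<in>{1..n}. R i > 0"
    and "0 < p" and "p < 1"
    and "z > 0"
  shows "\<exists>a0 b0 :: real. a0 > 0 \<and> b0 > 0 \<and>
     (\<forall>i\<in>{1..n}. V i - 1 / a0 - 1 / b0 \<noteq> 0) \<and>
     (1 - p) / p * b0 = (\<Sum>i=1..n. (1 + b0 / (a0 * R i)) / (V i - 1 / a0 - 1 / b0)) \<and>
     1 / (z * p) * b0 - a0 = (\<Sum>i=1..n. (1 + a0 * R i / b0) / (V i - 1 / a0 - 1 / b0))"
proof -
  define I where "I = {1..n}"
  have fin: "finite I" and ne: "I \<noteq> {}" using assms(1) by (auto simp: I_def)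
  define m where "m = Min (V ` I)"
  have "m \<in> V ` I" unfolding m_def using fin ne by (intro Min_in) auto
  then obtain i0 where i0: "i0 \<in> I" "V i0 = m" by auto
  have mle: "\<And>i. i \<in> I \<Longrightarrow> m \<le> V i" unfolding m_def using fin by auto
  have Vp: "\<And>i. i \<in> I \<Longrightarrow> V i > 0" and Rp: "\<And>i. i \<in> I \<Longrightarrow> R i > 0"
    using assms(2,3) by (auto simp: I_def)
  have mp: "m > 0" using i0 Vp by auto
  define c1 where "c1 = (1 - p) / p"
  have c1p: "c1 > 0" using assms(4,5) by (simp add: c1_def)
  define K where "K = c1 * (1 + R i0) + 1"
  have Kp: "K > 0" using c1p Rp[OF i0(1)] unfolding K_def by (smt (verit) mult_pos_pos)
  define ss where "ss = K * m / (1 + K)"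
  have ssp: "ss > 0" using Kp mp by (simp add: ss_def)
  have ssm: "ss < m" using Kp mp by (simp add: ss_def field_simps)
  define w where "w i s = s / (V i - s)" for i s
  define P where "P s = (\<Sum>i\<in>I. w i s)" for s
  define Q where "Q s = (\<Sum>i\<in>I. w i s / R i)" for s
  define G where "G s = (\<Sum>i\<in>I. w i s * R i)" for s
  define k where "k = 1 / (z * p)"
  have kp: "k > 0" using assms by (simp add: k_def)
  define bb where "bb s = k - 1 - P s" for s
  define gg where "gg s = 1 + G s" for s
  define T where "T s = (- bb s + sqrt ((bb s)^2 + 4*k*gg s)) / (2*k)" for s
  define F where "F s = P s + T s * Q s - c1 * (1 + T s)" for s
  have wnn: "w i s \<ge> 0" if "i \<in> I" "0 \<le> s" "s \<le> ss" for i s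
  proof -
    have "V i - s > 0" using mle[OF that(1)] that ssm by linarith
    thus ?thesis using that by (simp add: w_def)
  qed
  have ggp: "gg s > 0" if "0 \<le> s" "s \<le> ss" for s
  proof -
    have "G s \<ge> 0" unfolding G_def using wnn that Rp
      by (intro sum_nonneg) (simp add: less_imp_le)
    thus ?thesis by (simp add: gg_def)
  qed
  have Tp: "T s > 0" and Teq: "k * (T s)^2 + bb s * T s - gg s = 0"
    if "0 \<le> s" "s \<le> ss" for s
    using quad_root[OF kp ggp[OF that], of "bb s"] by (simp_all add: T_def)
  have F0: "F 0 < 0"
  proof -
    have "P 0 = 0" "Q 0 = 0" by (simp_all add: P_def Q_def w_def)
    thus ?thesis using Tp[of 0] ssp c1p by (simp add: F_def)
  qed
  have wK: "w i0 ss = K"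
  proof -
    have "V i0 - ss = m / (1 + K)" using Kp by (simp add: ss_def i0 field_simps)
    thus ?thesis using Kp mp by (simp add: w_def ss_def)
  qed
  have PK: "P ss \<ge> K"
  proof -
    have "P ss = w i0 ss + (\<Sum>i\<in>I - {i0}. w i ss)"
      unfolding P_def using fin i0(1) by (simp add: sum.remove)
    moreover have "(\<Sum>i\<in>I - {i0}. w i ss) \<ge> 0" using wnn ssp by (intro sum_nonneg) auto
    ultimately show ?thesis using wK by simp
  qed
  have QK: "Q ss \<ge> K / R i0"
  proof -
    have "Q ss = w i0 ss / R i0 + (\<Sum>i\<in>I - {i0}. w i ss / R i)"
      unfolding Q_def using fin i0(1) by (simp add: sum.remove)
    moreover have "(\<Sum>i\<in>I - {i0}. w i ss / R i) \<ge> 0" using wnn ssp Rp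
      by (intro sum_nonneg) (auto intro: divide_nonneg_pos)
    ultimately show ?thesis using wK by simp
  qed
  have Fss: "F ss > 0"
  proof -
    have R0: "R i0 > 0" using Rp i0 by auto
    have cR: "c1 * R i0 > 0" using c1p R0 by simp
    have "K > c1" using cR by (simp add: K_def algebra_simps)
    hence a: "P ss - c1 > 0" using PK by linarith
    have "K > c1 * R i0" using c1p by (simp add: K_def algebra_simps)
    hence "K / R i0 > c1" using R0 by (simp add: field_simps)
    hence "Q ss - c1 > 0" using QK by linarith
    hence "T ss * (Q ss - c1) > 0" using Tp[of ss] ssp by simp
    thus ?thesis using a by (simp add: F_def algebra_simps)
  qed
  have cont: "continuous_on {0..ss} F"
  proof -
    have cw: "continuous_on {0..ss} (w i)" if "i \<in> I" for i
    proof -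
      have "\<forall>s\<in>{0..ss}. V i - s \<noteq> 0" using mle[OF that] ssm by auto
      thus ?thesis unfolding w_def by (intro continuous_intros) auto
    qed
    have cP: "continuous_on {0..ss} P" unfolding P_def
      by (intro continuous_on_sum cw) 
    have cQ: "continuous_on {0..ss} Q" unfolding Q_def
      using Rp by (intro continuous_on_sum continuous_intros cw) (auto simp: less_imp_neq[symmetric])
    have cG: "continuous_on {0..ss} G" unfolding G_def
      by (intro continuous_on_sum continuous_intros cw) auto
    have cT: "continuous_on {0..ss} T" unfolding T_def bb_def gg_def
      using kp by (intro continuous_intros cP cG) auto
    show ?thesis unfolding F_def by (intro continuous_intros cP cQ cT)
  qed
  obtain x where x: "0 \<le> x" "x \<le> ss" "F x = 0"
    using IVT'[of F 0 0 ss] F0 Fss ssp cont by auto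
  have xp: "x > 0" using x F0 by (cases "x = 0") auto
  define t where "t = T x"
  have tp: "t > 0" using Tp x by (simp add: t_def)
  have E1: "P x + t * Q x = c1 * (1 + t)" using x(3) by (simp add: F_def t_def)
  have E2: "k * t^2 + (k - 1 - P x) * t - (1 + G x) = 0"
    using Teq[OF x(1,2)] by (simp add: t_def bb_def gg_def)
  have Dp: "V i - x > 0" if "i \<in> I" for i using mle[OF that] x ssm by linarith
  have np: "1 + t \<noteq> 0" "x * t \<noteq> 0" "x \<noteq> 0" "t \<noteq> 0" using tp xp by auto
  define a0 where "a0 = (1 + t) / (x * t)"
  define b0 where "b0 = (1 + t) / x"
  have a0p: "a0 > 0" using tp xp by (simp add: a0_def)
  have b0p: "b0 > 0" using tp xp by (simp add: b0_def)
  have s: "1 / a0 + 1 / b0 = x"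
  proof -
    have "1 / a0 + 1 / b0 = x * t / (1 + t) + x / (1 + t)" by (simp add: a0_def b0_def)
    also have "\<dots> = x * (t + 1) / (1 + t)" by (simp add: add_divide_distrib[symmetric] algebra_simps)
    also have "\<dots> = x" using tp by (simp add: add.commute)
    finally show ?thesis .
  qed
  have D: "V i - 1 / a0 - 1 / b0 = V i - x" for i using s by linarith
  have sum1: "(\<Sum>i\<in>I. (1 + b0 / (a0 * R i)) / (V i - 1 / a0 - 1 / b0)) = (P x + t * Q x) / x"
  proof -
    have "(\<Sum>i\<in>I. (1 + b0 / (a0 * R i)) / (V i - 1 / a0 - 1 / b0))
        = (\<Sum>i\<in>I. (w i x + t * (w i x / R i)) / x)"
    proof (rule sum.cong[OF refl])
      fix i assume i: "i \<in> I"
      have "b0 = t * a0" using np by (simp add: a0_def b0_def)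
      hence e1: "b0 / (a0 * R i) = t / R i" using a0p by simp
      have ne: "V i - x \<noteq> 0" "R i \<noteq> 0" using Dp[OF i] Rp[OF i] by auto
      have wx: "w i x / x = 1 / (V i - x)" using ne np by (simp add: w_def)
      have "(w i x + t * (w i x / R i)) / x = (w i x / x) * (1 + t / R i)"
        using ne np by (simp add: field_simps)
      then show "(1 + b0 / (a0 * R i)) / (V i - 1 / a0 - 1 / b0) = (w i x + t * (w i x / R i)) / x"
        unfolding D e1 wx by simp
    qed
    also have "\<dots> = (P x + t * Q x) / x"
      by (simp add: P_def Q_def sum_divide_distrib[symmetric] sum.distrib sum_distrib_left)
    finally show ?thesis .
  qed
  have sum2: "(\<Sum>i\<in>I. (1 + a0 * R i / b0) / (V i - 1 / a0 - 1 / b0)) = (t * P x + G x) / (x * t)"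
  proof -
    have "(\<Sum>i\<in>I. (1 + a0 * R i / b0) / (V i - 1 / a0 - 1 / b0))
        = (\<Sum>i\<in>I. (t * w i x + w i x * R i) / (x * t))"
    proof (rule sum.cong[OF refl])
      fix i assume i: "i \<in> I"
      have "a0 = b0 / t" using np by (simp add: a0_def b0_def)
      hence e1: "a0 * R i / b0 = R i / t" using b0p by simp
      have ne: "V i - x \<noteq> 0" "R i \<noteq> 0" using Dp[OF i] Rp[OF i] by auto
      have wx: "w i x / x = 1 / (V i - x)" using ne np by (simp add: w_def)
      have "(t * w i x + w i x * R i) / (x * t) = (w i x / x) * (1 + R i / t)"
        using ne np by (simp add: field_simps)
      then show "(1 + a0 * R i / b0) / (V i - 1 / a0 - 1 / b0) = (t * w i x + w i x * R i) / (x * t)"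
        unfolding D e1 wx by simp
    qed
    also have "\<dots> = (t * P x + G x) / (x * t)"
      by (simp add: P_def G_def sum_divide_distrib[symmetric] sum.distrib sum_distrib_left)
    finally show ?thesis .
  qed
  show ?thesis
  proof (intro exI conjI)
    show "a0 > 0" "b0 > 0" by (fact a0p, fact b0p)
    show "\<forall>i\<in>{1..n}. V i - 1 / a0 - 1 / b0 \<noteq> 0" unfolding D using Dp unfolding I_def by (metis less_irrefl diff_self)
    show "(1 - p) / p * b0 = (\<Sum>i=1..n. (1 + b0 / (a0 * R i)) / (V i - 1 / a0 - 1 / b0))"
      using sum1[unfolded I_def] E1 xp by (simp add: c1_def[symmetric] b0_def)
    show "1 / (z * p) * b0 - a0 = (\<Sum>i=1..n. (1 + a0 * R i / b0) / (V i - 1 / a0 - 1 / b0))"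
    proof -
      have "t * P x + G x = k * t^2 + (k - 1) * t - 1" using E2 by (simp add: algebra_simps)
      moreover have "k * b0 - a0 = (k * t^2 + (k - 1) * t - 1) / (x * t)"
        using np by (simp add: a0_def b0_def field_simps power2_eq_square)
      ultimately have "(t * P x + G x) / (x * t) = k * b0 - a0" by simp
      thus ?thesis using sum2[unfolded I_def] by (simp add: k_def)
    qed
  qed
qed

end
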